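(* Let $f\in\mathbb{Z}[X]$ be a polynomial which is not a square in $\mathbb{C}[X]$. Then there exists a finite set $P_f$ of prime numbers such that for every finite set $P$ of prime numbers there are infinitely many $x\in\mathbb{Z}$ with (a) $p\nmid f(x)$ for every $p\in P\setminus P_f$, and (b) $v_p(f(x))\equiv1\pmod 2$ for some prime $p\notin P$.
   Context: $v_p$ denotes the $p$-adic valuation on $\mathbb{Q}^\times$. *)

theory Defs
  imports "HOL-Computational_Algebra.Computational_Algebra" Complex_Main
begin

end

theory Submission
  imports Defs "HOL-Number_Theory.Cong"
begin


lemma poly_diff_dvd_int:
  fixes p :: "int poly"
  assumes "m dvd (x - y)"
  shows "m dvd (poly p x - poly p y)"
proof (induction p)
  case 0 then show ?case by simp
next
  case (pCons a p)
  have "poly (pCons a p) x - poly (pCons a p) y = x * (poly p x - poly p y) + (x - y) * poly p y"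
    by (simp add: algebra_simps)
  then show ?case using pCons.IH assms by simp
qed

lemma taylor_mod_sq:
  fixes p :: "int poly"
  shows "q^2 dvd (poly p (x + q) - poly p x - q * poly (pderiv p) x)"
proof (induction p)
  case 0 then show ?case by simp
next
  case (pCons a p)
  have d1: "q dvd poly p (x + q) - poly p x" using poly_diff_dvd_int[of q "x+q" x p] by simp
  have "poly (pCons a p) (x + q) - poly (pCons a p) x - q * poly (pderiv (pCons a p)) x
     = x * (poly p (x + q) - poly p x - q * poly (pderiv p) x) + q * (poly p (x + q) - poly p x)"
    by (simp add: pderiv_pCons algebra_simps)
  moreover have "q^2 dvd q * (poly p (x + q) - poly p x)"
    using d1 by (simp add: power2_eq_square)
  moreover have "q^2 dvd x * (poly p (x + q) - poly p x - q * poly (pderiv p) x)"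
    using pCons.IH by (rule dvd_mult)
  ultimately show ?case using pCons.IH by (metis dvd_add)
qed

lemma schur:
  fixes h :: "int poly" and N :: int
  assumes "degree h > 0" "N \<noteq> 0"
  shows "\<exists>q x. prime q \<and> q dvd poly h x \<and> \<not> q dvd N"
proof (cases "poly h 0 = 0")
  case True
  obtain q :: nat where q: "prime q" "q > nat \<bar>N\<bar>" using bigger_prime by blast
  have "\<not> int q dvd N"
  proof
    assume "int q dvd N"
    then have "\<bar>int q\<bar> \<le> \<bar>N\<bar>" by (rule dvd_imp_le_int[OF assms(2)])
    then show False using q(2) by simp
  qed
  moreover have "prime (int q)" using q(1) by simp
  moreover have "int q dvd poly h 0" using True by simp
  ultimately show ?thesis by blast
next
  case False
  obtain a p0 where h: "h = pCons a p0" by (cases h)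
  have a: "a = poly h 0" using h by simp
  have p0: "p0 \<noteq> 0" using assms(1) h by auto
  define c where "c = a * N"
  have c0: "c \<noteq> 0" using False a assms(2) c_def by simp
  define Q where "Q = [:0, N:] * pcompose p0 [:0, c:]"
  have pc: "pcompose p0 [:0, c:] \<noteq> 0"
    using pcompose_eq_0[of p0 "[:0, c:]"] p0 c0 by auto
  have dQ: "degree Q \<ge> 1" unfolding Q_def using pc assms(2) by (simp add: degree_mult_eq)
  have polyQ: "poly Q t = N * t * poly p0 (c * t)" for t
    unfolding Q_def by (simp add: poly_pcompose algebra_simps)
  have fin: "finite {t. poly Q t = e}" for e
  proof -
    have "Q - [:e:] \<noteq> 0" using dQ by (metis degree_pCons_0 le_numeral_extra(2) right_minus_eq)
    then have "finite {t. poly (Q - [:e:]) t = 0}" by (rule poly_roots_finite)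
    then show ?thesis by simp
  qed
  have "finite ({t. poly Q t = 0} \<union> {t. poly Q t = -1} \<union> {t. poly Q t = -2})"
    using fin[of 0] fin[of "-1"] fin[of "-2"] by (intro finite_UnI)
  then obtain t :: int where t: "t \<notin> {t. poly Q t = 0} \<union> {t. poly Q t = -1} \<union> {t. poly Q t = -2}"
    using ex_new_if_finite[OF infinite_UNIV_int] by metis
  define m where "m = 1 + N * t * poly p0 (c * t)"
  have t': "N * t * poly p0 (c * t) \<noteq> 0" "N * t * poly p0 (c * t) \<noteq> -1" "N * t * poly p0 (c * t) \<noteq> -2"
    using t unfolding polyQ by simp_all
  have m0: "m \<noteq> 0" "\<not> is_unit m" unfolding m_def zdvd1_eq using t' by arith+
  then obtain q where q: "q dvd m" "prime q" using prime_divisor_exists by blast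
  have "poly h (c * t) = a * m" unfolding h m_def c_def by (simp add: algebra_simps)
  then have "q dvd poly h (c * t)" using q by simp
  moreover have "\<not> q dvd N"
  proof
    assume "q dvd N"
    then have "q dvd m - N * (t * poly p0 (c * t))" using q by simp
    then have "q dvd 1" unfolding m_def by (simp add: algebra_simps)
    then show False using not_prime_unit q(2) by metis
  qed
  ultimately show ?thesis using q by blast
qed



lemma clear_denom:
  fixes S :: "int fract poly"
  shows "\<exists>d s. d \<noteq> 0 \<and> fract_poly s = smult (to_fract d) S"
proof -
  obtain n d where nd: "fract_content S = Fract n d" "d \<noteq> 0" by (cases "fract_content S")
  have S: "S = smult (Fract n d) (fract_poly (primitive_part_fract S))"
    using content_times_primitive_part_fract[of S] nd by simp
  have "to_fract d * Fract n d = to_fract n"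
    using nd(2) by (simp add: Fract_conv_to_fract)
  then have "smult (to_fract d) S = fract_poly (smult n (primitive_part_fract S))"
    by (subst S) (simp del: fract_poly_smult add: fract_poly_smult)
  then show ?thesis using nd(2) by metis
qed

lemma field_bezout:
  fixes A B :: "'a::field poly"
  assumes irr: "irreducible A" and nd: "\<not> A dvd B"
  shows "\<exists>S T. S * A + T * B = 1"
proof -
  define I where "I = {G. G \<noteq> 0 \<and> (\<exists>S T. G = S * A + T * B)}"
  have A0: "A \<noteq> 0" using irr by (simp add: irreducible_def)
  have "A = 1 * A + 0 * B" by simp
  then have "A \<in> I" unfolding I_def using A0 by blast
  then obtain G where G: "G \<in> I" and Gmin: "\<And>G'. G' \<in> I \<Longrightarrow> degree G \<le> degree G'"
    using ex_has_least_nat[of "\<lambda>G. G \<in> I" A degree] by blast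
  from G obtain S T where G0: "G \<noteq> 0" and GST: "G = S * A + T * B" unfolding I_def by blast
  have dvdG: "G dvd X" if X: "\<exists>S' T'. X = S' * A + T' * B" for X
  proof (rule ccontr)
    assume ndv: "\<not> G dvd X"
    from X obtain S' T' where X': "X = S' * A + T' * B" by blast
    have "X mod G = X - (X div G) * G" using div_mult_mod_eq[of X G] by (metis add_diff_cancel_left')
    also have "\<dots> = (S' - (X div G) * S) * A + (T' - (X div G) * T) * B"
      unfolding X' GST by (simp add: algebra_simps)
    finally have r: "X mod G = (S' - (X div G) * S) * A + (T' - (X div G) * T) * B" .
    have "X mod G \<noteq> 0" using ndv by (simp add: mod_eq_0_iff_dvd)
    then have "X mod G \<in> I" unfolding I_def using r by blast
    then have "degree G \<le> degree (X mod G)" by (rule Gmin)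
    moreover have "degree (X mod G) < degree G"
      using \<open>X mod G \<noteq> 0\<close> G0 degree_mod_less' by blast
    ultimately show False by simp
  qed
  have "A = 1 * A + 0 * B" "B = 0 * A + 1 * B" by simp_all
  then have GA: "G dvd A" and GB: "G dvd B" using dvdG by blast+
  from GA obtain K where K: "A = G * K" by (elim dvdE)
  from irreducibleD[OF irr K] have "is_unit G"
  proof
    assume "is_unit K"
    then have "A dvd G" using K by (metis dvd_mult_unit_iff dvd_refl)
    then have "A dvd B" using GB by (rule dvd_trans)
    then show ?thesis using nd by simp
  qed
  then have "degree G = 0" using is_unit_iff_degree G0 by blast
  then obtain c where c: "G = [:c:]" by (elim degree_eq_zeroE)
  then have c0: "c \<noteq> 0" using G0 by auto
  have "smult (inverse c) S * A + smult (inverse c) T * B = smult (inverse c) G"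
    unfolding GST by (simp add: smult_add_right)
  also have "\<dots> = 1" using c c0 by simp
  finally show ?thesis by blast
qed

lemma int_bezout:
  fixes a b :: "int poly"
  assumes irr: "irreducible (fract_poly a)" and ct: "content a = 1" and nd: "\<not> a dvd b"
  shows "\<exists>c s t. c \<noteq> 0 \<and> s * a + t * b = [:c:]"
proof -
  have "\<not> fract_poly a dvd fract_poly b" using nd ct fract_poly_dvdD by blast
  then obtain S T where ST: "S * fract_poly a + T * fract_poly b = 1"
    using field_bezout[OF irr] by blast
  obtain d1 s where s: "d1 \<noteq> 0" "fract_poly s = smult (to_fract d1) S" using clear_denom by blast
  obtain d2 t where t: "d2 \<noteq> 0" "fract_poly t = smult (to_fract d2) T" using clear_denom by blast
  have "fract_poly (smult d2 s * a + smult d1 t * b)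
      = smult (to_fract d1 * to_fract d2) (S * fract_poly a + T * fract_poly b)"
    using s t by (simp add: smult_add_right mult.commute)
  also have "\<dots> = fract_poly [:d1 * d2:]" using ST s(1) t(1) by (simp add: map_poly_pCons)
  finally have "smult d2 s * a + smult d1 t * b = [:d1 * d2:]" by (simp only: fract_poly_eq_iff)
  then show ?thesis using s t by (metis mult_eq_0_iff)
qed



lemma map_of_int_mult:
  "map_poly (of_int :: int \<Rightarrow> 'a::comm_ring_1) (p * q) = map_poly of_int p * map_poly of_int q"
  by (rule poly_eqI) (simp add: coeff_map_poly coeff_mult)

lemma map_of_int_smult:
  "map_poly (of_int :: int \<Rightarrow> 'a::comm_ring_1) (smult a p) = smult (of_int a) (map_poly of_int p)"
  by (rule poly_eqI) (simp add: coeff_map_poly)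

lemma map_of_int_power:
  "map_poly (of_int :: int \<Rightarrow> 'a::comm_ring_1) (p ^ n) = (map_poly of_int p) ^ n"
  by (induction n) (simp_all add: map_of_int_mult)

lemma nonsq:
  fixes f :: "int poly"
  assumes ns: "\<not> (\<exists>g :: complex poly. map_poly of_int f = g ^ 2)"
  shows "f \<noteq> 0 \<and> (\<exists>h. prime h \<and> degree h > 0 \<and> odd (multiplicity h f))"
proof (rule ccontr)
  assume "\<not> ?thesis"
  moreover have f0: "f \<noteq> 0"
  proof
    assume "f = 0"
    then have "map_poly (of_int :: int \<Rightarrow> complex) f = 0 ^ 2" by simp
    then show False using ns by blast
  qed
  ultimately have ev: "\<And>h. prime h \<Longrightarrow> degree h > 0 \<Longrightarrow> even (multiplicity h f)" by blast
  define M where "M = prime_factorization f"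
  define A where "A = set_mset M"
  define A1 where "A1 = {h\<in>A. degree h = 0}"
  define A2 where "A2 = {h\<in>A. degree h \<noteq> 0}"
  have finA: "finite A1" "finite A2" unfolding A1_def A2_def A_def by auto
  have AU: "A = A1 \<union> A2" "A1 \<inter> A2 = {}" unfolding A1_def A2_def by auto
  have "is_unit (unit_factor f)" using f0 by simp
  then obtain e where e: "unit_factor f = [:e:]" using is_unit_poly_iff by blast
  have nM: "normalize (prod_mset M) = normalize f" unfolding M_def using prod_mset_prime_factorization_weak[OF f0] .
  have "prod_mset M \<noteq> 0" using nM f0 by (metis normalize_eq_0_iff)
  then have "is_unit (unit_factor (prod_mset M))" by simp
  then obtain e2 where e2: "unit_factor (prod_mset M) = [:e2:]" "is_unit e2" using is_unit_poly_iff by blast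
  have e22: "e2 * e2 = 1" using e2(2) by (auto simp: zdvd1_eq abs_if split: if_splits)
  have "[:e2:] * prod_mset M = [:e2:] * (unit_factor (prod_mset M) * normalize (prod_mset M))" by simp
  also have "\<dots> = normalize (prod_mset M)" unfolding e2(1) using e22 by (simp add: mult.assoc[symmetric])
  finally have nf2: "normalize f = [:e2:] * prod_mset M" using nM by simp
  have "f = unit_factor f * normalize f" by simp
  also have "\<dots> = [:e:] * ([:e2:] * prod_mset M)" using e nf2 by simp
  also have "\<dots> = [:e * e2:] * prod_mset M" by (simp add: mult.commute)
  finally have fM: "f = [:e * e2:] * prod_mset M" .
  have "prod_mset M = (\<Prod>h\<in>A. h ^ count M h)" unfolding A_def by (rule prod_mset_multiplicity)
  also have "\<dots> = (\<Prod>h\<in>A1. h ^ count M h) * (\<Prod>h\<in>A2. h ^ count M h)"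
    unfolding AU(1) using finA AU(2) by (rule prod.union_disjoint)
  finally have nf: "prod_mset M = (\<Prod>h\<in>A1. h ^ count M h) * (\<Prod>h\<in>A2. h ^ count M h)" .
  have "(\<Prod>h\<in>A2. h ^ count M h) = (\<Prod>h\<in>A2. (h ^ (count M h div 2)) ^ 2)"
  proof (rule prod.cong)
    fix h assume h: "h \<in> A2"
    then have hp: "prime h" unfolding A2_def A_def M_def by (auto intro: in_prime_factors_imp_prime)
    have "count M h = multiplicity h f" unfolding M_def using hp by (rule count_prime_factorization_prime)
    moreover have "even (multiplicity h f)" using ev hp h unfolding A2_def by auto
    ultimately have "count M h = 2 * (count M h div 2)" by simp
    then show "h ^ count M h = (h ^ (count M h div 2)) ^ 2" by (metis power_mult mult.commute)
  qed simp
  also have "\<dots> = (\<Prod>h\<in>A2. h ^ (count M h div 2)) ^ 2" by (simp add: prod_power_distrib)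
  finally have P2: "(\<Prod>h\<in>A2. h ^ count M h) = (\<Prod>h\<in>A2. h ^ (count M h div 2)) ^ 2" .
  have "degree (\<Prod>h\<in>A1. h ^ count M h) \<le> sum (degree \<circ> (\<lambda>h. h ^ count M h)) A1"
    using finA(1) by (rule degree_prod_sum_le)
  also have "\<dots> = 0" unfolding A1_def
  proof (intro sum.neutral ballI)
    fix x assume "x \<in> {h\<in>A. degree h = 0}"
    then have "degree x = 0" by simp
    then show "(degree \<circ> (\<lambda>h. h ^ count M h)) x = 0" using degree_power_le[of x "count M x"] by simp
  qed
  finally obtain k where k: "(\<Prod>h\<in>A1. h ^ count M h) = [:k:]" by (metis degree_eq_zeroE le_zero_eq)
  define G where "G = (\<Prod>h\<in>A2. h ^ (count M h div 2))"
  have fe: "f = [:e * e2 * k:] * G ^ 2" unfolding fM nf k P2 G_def by (simp add: ac_simps)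
  define c :: complex where "c = of_int (e * e2 * k)"
  have "map_poly (of_int :: int \<Rightarrow> complex) f = [:c:] * (map_poly of_int G) ^ 2"
    unfolding fe c_def by (simp add: map_of_int_mult map_of_int_power map_of_int_smult)
  also have "\<dots> = (smult (csqrt c) (map_poly of_int G)) ^ 2"
    using power2_csqrt[of c] by (simp add: power_mult_distrib power2_eq_square)
  finally show False using ns by blast
qed


lemma dvd_from_diff:
  fixes m a b :: int
  assumes "m dvd a - b" "m dvd b" shows "m dvd a"
proof -
  have "m dvd (a - b) + b" using assms by (rule dvd_add)
  then show ?thesis by simp
qed

lemma ndvd_from_diff:
  fixes m a b :: int
  assumes "m dvd a - b" "\<not> m dvd b" shows "\<not> m dvd a"
proof
  assume "m dvd a"
  then have "m dvd a - (a - b)" using assms(1) by (rule dvd_diff)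
  then show False using assms(2) by simp
qed

lemma dvd_from_diff2:
  fixes m a b :: int
  assumes "m dvd a - b" "m dvd a" shows "m dvd b"
proof -
  have "m dvd a - (a - b)" using assms(2,1) by (rule dvd_diff)
  then show ?thesis by simp
qed

theorem lemma5p2:
  fixes f :: "int poly"
  assumes not_square: "\<not> (\<exists>g :: complex poly. map_poly of_int f = g ^ 2)"
  shows "\<exists>Pf :: int set. finite Pf \<and> (\<forall>p\<in>Pf. prime p) \<and>
    (\<forall>P :: int set. finite P \<and> (\<forall>p\<in>P. prime p) \<longrightarrow>
      infinite {x :: int.
         (\<forall>p \<in> P - Pf. \<not> p dvd poly f x) \<and>
         (\<exists>p. prime p \<and> p \<notin> P \<and> poly f x \<noteq> 0 \<and> odd (multiplicity p (poly f x)))})"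
proof -
  obtain h where f0: "f \<noteq> 0" and hp: "prime h" and hd: "degree h > 0" and hk: "odd (multiplicity h f)"
    using nonsq[OF not_square] by blast
  define k where "k = multiplicity h f"
  have kodd: "odd k" using hk k_def by simp
  have hirr: "irreducible h" using hp by (simp add: prime_elem_imp_irreducible)
  have irrf: "irreducible (fract_poly h)" and ct: "content h = 1"
    using hirr hd nonconst_poly_irreducible_iff[of h] by auto
  define u where "u = f div h ^ k"
  have fhu: "f = h ^ k * u" unfolding u_def k_def using multiplicity_dvd[of h f] by (metis dvd_mult_div_cancel)
  have hu: "\<not> h dvd u" unfolding u_def k_def using f0 hp by (intro multiplicity_decompose) (auto simp: prime_def)
  obtain c1 s1 t1 where c1: "c1 \<noteq> 0" "s1 * h + t1 * u = [:c1:]"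
    using int_bezout[OF irrf ct hu] by blast
  have hd': "\<not> h dvd pderiv h"
  proof
    assume "h dvd pderiv h"
    moreover have "pderiv h \<noteq> 0" using hd pderiv_eq_0_iff[of h] by simp
    ultimately have "degree h \<le> degree (pderiv h)" by (rule dvd_imp_degree_le)
    then show False using hd by (simp add: degree_pderiv)
  qed
  obtain c2 s2 t2 where c2: "c2 \<noteq> 0" "s2 * h + t2 * pderiv h = [:c2:]"
    using int_bezout[OF irrf ct hd'] by blast
  have ev1: "c1 = poly s1 x * poly h x + poly t1 x * poly u x" for x
    using arg_cong[OF c1(2), of "\<lambda>p. poly p x"] by simp
  have ev2: "c2 = poly s2 x * poly h x + poly t2 x * poly (pderiv h) x" for x
    using arg_cong[OF c2(2), of "\<lambda>p. poly p x"] by simp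
  have polyf: "poly f x = poly h x ^ k * poly u x" for x unfolding fhu by simp
  have "finite {x. poly f x = 0}" using f0 by (rule poly_roots_finite)
  then obtain i0 :: int where i0: "poly f i0 \<noteq> 0"
    using ex_new_if_finite[OF infinite_UNIV_int] by blast
  define Pf where "Pf = {p. prime p \<and> p dvd poly f i0}"
  have finPf: "finite Pf"
    using finite_divisors_int[OF i0] by (rule finite_subset[rotated]) (auto simp: Pf_def)
  have "\<forall>P :: int set. finite P \<and> (\<forall>p\<in>P. prime p) \<longrightarrow>
      infinite {x :: int.
         (\<forall>p \<in> P - Pf. \<not> p dvd poly f x) \<and>
         (\<exists>p. prime p \<and> p \<notin> P \<and> poly f x \<noteq> 0 \<and> odd (multiplicity p (poly f x)))}"
  proof (intro allI impI)
    fix P :: "int set" assume P: "finite P \<and> (\<forall>p\<in>P. prime p)"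
    define Mm where "Mm = (\<Prod>p\<in>P - Pf. p)"
    define N where "N = (\<Prod>p\<in>P. p) * c1 * c2"
    have P0: "(\<Prod>p\<in>P. p) \<noteq> 0" using P by (auto simp: prod_zero_iff)
    have Mm0: "Mm \<noteq> 0" using P unfolding Mm_def by (auto simp: prod_zero_iff)
    have N0: "N \<noteq> 0" unfolding N_def using P0 c1 c2 by simp
    obtain q x0 where q: "prime q" "q dvd poly h x0" "\<not> q dvd N" using schur[OF hd N0] by blast
    have qP: "q \<notin> P"
    proof
      assume "q \<in> P"
      then have "q dvd (\<Prod>p\<in>P. p)" using P by (intro dvd_prodI) auto
      then have "q dvd N" unfolding N_def by simp
      then show False using q(3) by simp
    qed
    have qc1: "\<not> q dvd c1" and qc2: "\<not> q dvd c2" using q(3) unfolding N_def by auto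
    have qu0: "\<not> q dvd poly u x0"
    proof
      assume "q dvd poly u x0"
      then have "q dvd poly s1 x0 * poly h x0 + poly t1 x0 * poly u x0" using q(2) by simp
      then show False using qc1 ev1[of x0] by simp
    qed
    have qd0: "\<not> q dvd poly (pderiv h) x0"
    proof
      assume "q dvd poly (pderiv h) x0"
      then have "q dvd poly s2 x0 * poly h x0 + poly t2 x0 * poly (pderiv h) x0" using q(2) by simp
      then show False using qc2 ev2[of x0] by simp
    qed
    have q0: "q \<noteq> 0" using q(1) by auto
    obtain x1 where x1: "q dvd poly h x1" "\<not> q^2 dvd poly h x1" "\<not> q dvd poly u x1"
    proof (cases "q^2 dvd poly h x0")
      case False
      then show ?thesis using that q(2) qu0 by blast
    next
      case True
      have t: "q^2 dvd (poly h (x0 + q) - poly h x0 - q * poly (pderiv h) x0)" by (rule taylor_mod_sq)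
      have a: "q dvd poly h (x0 + q) - poly h x0" using poly_diff_dvd_int[of q "x0 + q" x0 h] by simp
      have b: "q dvd poly u (x0 + q) - poly u x0" using poly_diff_dvd_int[of q "x0 + q" x0 u] by simp
      have "\<not> q^2 dvd poly h (x0 + q)"
      proof
        assume "q^2 dvd poly h (x0 + q)"
        then have "q^2 dvd poly h (x0 + q) - (poly h (x0 + q) - poly h x0 - q * poly (pderiv h) x0) - poly h x0"
          using dvd_diff[OF dvd_diff[OF _ t] True] by blast
        moreover have "poly h (x0 + q) - (poly h (x0 + q) - poly h x0 - q * poly (pderiv h) x0) - poly h x0
           = q * poly (pderiv h) x0" by simp
        ultimately have "q * q dvd q * poly (pderiv h) x0" by (simp add: power2_eq_square)
        then have "q dvd poly (pderiv h) x0" using q0 by simp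
        then show False using qd0 by simp
      qed
      moreover have "q dvd poly h (x0 + q)" using a q(2) by (rule dvd_from_diff)
      moreover have "\<not> q dvd poly u (x0 + q)" using b qu0 by (rule ndvd_from_diff)
      ultimately show ?thesis using that by blast
    qed
    have cop: "coprime Mm (q^2)" unfolding Mm_def
    proof (rule prod_coprime_left)
      fix p assume "p \<in> P - Pf"
      then have "prime p" "p \<noteq> q" using P qP by auto
      then have "coprime p q" using q(1) by (simp add: primes_coprime)
      then show "coprime p (q^2)" by simp
    qed
    obtain xs where xs: "[xs = i0] (mod Mm)" "[xs = x1] (mod q^2)"
      using binary_chinese_remainder_int[OF cop] by blast
    define F where "F t = xs + Mm * q^2 * t" for t
    have injF: "inj F" unfolding F_def inj_def using Mm0 q0 by simp
    have mem: "(\<forall>p \<in> P - Pf. \<not> p dvd poly f (F t)) \<and>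
         (\<exists>p. prime p \<and> p \<notin> P \<and> poly f (F t) \<noteq> 0 \<and> odd (multiplicity p (poly f (F t))))" for t
    proof -
      have eq1: "F t - i0 = (xs - i0) + Mm * (q^2 * t)" unfolding F_def by (simp add: algebra_simps)
      have "Mm dvd xs - i0" using xs(1) by (simp add: cong_iff_dvd_diff)
      then have "Mm dvd (xs - i0) + Mm * (q^2 * t)" by (intro dvd_add dvd_triv_left)
      then have d1: "Mm dvd F t - i0" by (simp only: eq1)
      have eq2: "F t - x1 = (xs - x1) + q^2 * (Mm * t)" unfolding F_def by (simp add: algebra_simps)
      have "q^2 dvd xs - x1" using xs(2) by (simp add: cong_iff_dvd_diff)
      then have "q^2 dvd (xs - x1) + q^2 * (Mm * t)" by (intro dvd_add dvd_triv_left)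
      then have d2: "q^2 dvd F t - x1" by (simp only: eq2)
      have A: "\<not> p dvd poly f (F t)" if p: "p \<in> P - Pf" for p
      proof
        assume p2: "p dvd poly f (F t)"
        have "p dvd Mm" unfolding Mm_def using p P by (intro dvd_prodI) auto
        then have "p dvd F t - i0" using d1 by (rule dvd_trans)
        then have "p dvd poly f (F t) - poly f i0" by (rule poly_diff_dvd_int)
        then have "p dvd poly f i0" using p2 by (rule dvd_from_diff2)
        then have "p \<in> Pf" using p P unfolding Pf_def by auto
        then show False using p by simp
      qed
      have e1: "q^2 dvd poly h (F t) - poly h x1" using d2 by (rule poly_diff_dvd_int)
      have "q dvd q^2" by (simp add: power2_eq_square)
      have e2: "q dvd poly u (F t) - poly u x1" using dvd_trans[OF \<open>q dvd q^2\<close> d2] by (rule poly_diff_dvd_int)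
      have e3: "q dvd poly h (F t) - poly h x1" using e1 \<open>q dvd q^2\<close> by (rule dvd_trans[rotated])
      have h1: "\<not> q^2 dvd poly h (F t)" using e1 x1(2) by (rule ndvd_from_diff)
      have h2: "q dvd poly h (F t)" using e3 x1(1) by (rule dvd_from_diff)
      have u1: "\<not> q dvd poly u (F t)" using e2 x1(3) by (rule ndvd_from_diff)
      have hne: "poly h (F t) \<noteq> 0" using h1 by auto
      have une: "poly u (F t) \<noteq> 0" using u1 by auto
      have fne: "poly f (F t) \<noteq> 0" using hne une polyf by simp
      have mh: "multiplicity q (poly h (F t)) = 1"
        using h1 h2 by (intro multiplicity_eqI) (auto simp: power2_eq_square)
      have mu: "multiplicity q (poly u (F t)) = 0" using u1 by (rule not_dvd_imp_multiplicity_0)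
      have pe: "prime_elem q" using q(1) by (rule prime_imp_prime_elem)
      have hk0: "poly h (F t) ^ k \<noteq> 0" using hne by simp
      have "multiplicity q (poly f (F t)) = multiplicity q (poly h (F t) ^ k) + multiplicity q (poly u (F t))"
        unfolding polyf by (rule prime_elem_multiplicity_mult_distrib[OF pe hk0 une])
      also have "\<dots> = k * multiplicity q (poly h (F t)) + 0"
        using prime_elem_multiplicity_power_distrib[OF pe hne] mu by simp
      finally have "multiplicity q (poly f (F t)) = k" using mh by simp
      then show ?thesis using A q(1) qP fne kodd by auto
    qed
    have "range F \<subseteq> {x :: int.
         (\<forall>p \<in> P - Pf. \<not> p dvd poly f x) \<and>
         (\<exists>p. prime p \<and> p \<notin> P \<and> poly f x \<noteq> 0 \<and> odd (multiplicity p (poly f x)))}"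
      using mem by blast
    moreover have "infinite (range F)" using injF infinite_UNIV_int by (metis finite_imageD)
    ultimately show "infinite {x :: int.
         (\<forall>p \<in> P - Pf. \<not> p dvd poly f x) \<and>
         (\<exists>p. prime p \<and> p \<notin> P \<and> poly f x \<noteq> 0 \<and> odd (multiplicity p (poly f x)))}"
      using infinite_super by blast
  qed
  then show ?thesis using finPf unfolding Pf_def by blast
qed

end
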